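(* Fix a positive integer $k$. Consider either of the following two cases. (Squared case) Fix $m$ tuples $(\beta_i,\gamma_i,\delta_i)$ of positive reals and let $B_i=1+\beta_i+\frac1{\gamma_i}$, $C_i=1+\gamma_i+\frac1{\delta_i}$, $D_i=1+\delta_i+\frac1{\beta_i}$ ($1\le i\le m$). Let $P_{\mathrm{low}}$ be the linear program: maximize $\sum_{j=1}^k\alpha_j$ subject to $f+\sum_{j=1}^k d_j\le1$; $\alpha_j\le\alpha_{j+1}$ ($1\le j<k$); $\alpha_j\le B_i\alpha_l+C_id_j+D_id_l$ ($1\le j,l\le k$, $1\le i\le m$); $x_{jl}\ge\alpha_j-d_l$ ($1\le j\le l\le k$); $\sum_{l=j}^k x_{jl}\le f$ ($1\le j\le k$); $\alpha_j,d_j,f,x_{jl}\ge0$. (Metric case) Let $P_{\mathrm{low}}$ be the same program with the constraints $\alpha_j\le B_i\alpha_l+C_id_j+D_id_l$ replaced by $\alpha_j\le\alpha_l+d_j+d_l$ ($1\le j,l\le k$). In either case let $P_{\mathrm{up}}$ be the program obtained from $P_{\mathrm{low}}$ by imposing $x_{jl}\ge\alpha_j-d_l$ only for $1\le j<l\le k$ (the variables $x_{jj}$ remain in $\sum_{l=j}^kx_{jl}\le f$ and are only required to be non-negative). Let $z_k$ be the optimal value of $P_{\mathrm{low}}$, and let $(\boldsymbol\alpha,\mathbf d,\mathbf x,f)$ be an optimal solution of $P_{\mathrm{up}}$, with value $x_k$. If $\varepsilon=\max_j\{\alpha_j-d_j\}$, then $z_k\ge\frac{1}{1+\varepsilon}x_k$.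 *)

theory Defs
  imports Complex_Main
begin

text \<open>T is the set of coefficient triples (B,C,D) used in the "triangle" constraints
  alpha_j <= B alpha_l + C d_j + D d_l.\<close>

definition lp_common ::
  "nat \<Rightarrow> (real \<times> real \<times> real) set \<Rightarrow> (nat \<Rightarrow> real) \<Rightarrow> (nat \<Rightarrow> real)
     \<Rightarrow> (nat \<Rightarrow> nat \<Rightarrow> real) \<Rightarrow> real \<Rightarrow> bool" where
  "lp_common k T alpha d x f \<longleftrightarrow>
     f + (\<Sum>j=1..k. d j) \<le> 1
   \<and> (\<forall>j. 1 \<le> j \<and> j < k \<longrightarrow> alpha j \<le> alpha (j+1))
   \<and> (\<forall>j\<in>{1..k}. \<forall>l\<in>{1..k}. \<forall>(B,C,D)\<in>T. alpha j \<le> B * alpha l + C * d j + D * d l)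
   \<and> (\<forall>j\<in>{1..k}. (\<Sum>l=j..k. x j l) \<le> f)
   \<and> (\<forall>j\<in>{1..k}. alpha j \<ge> 0 \<and> d j \<ge> 0)
   \<and> f \<ge> 0
   \<and> (\<forall>j\<in>{1..k}. \<forall>l\<in>{j..k}. x j l \<ge> 0)"

definition lp_low_feasible where
  "lp_low_feasible k T alpha d x f \<longleftrightarrow> lp_common k T alpha d x f
     \<and> (\<forall>j\<in>{1..k}. \<forall>l\<in>{j..k}. x j l \<ge> alpha j - d l)"

definition lp_up_feasible where
  "lp_up_feasible k T alpha d x f \<longleftrightarrow> lp_common k T alpha d x f
     \<and> (\<forall>j\<in>{1..k}. \<forall>l\<in>{j<..k}. x j l \<ge> alpha j - d l)"

definition lp_obj :: "nat \<Rightarrow> (nat \<Rightarrow> real) \<Rightarrow> real" where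
  "lp_obj k alpha = (\<Sum>j=1..k. alpha j)"

definition lp_low_value :: "nat \<Rightarrow> (real \<times> real \<times> real) set \<Rightarrow> real" where
  "lp_low_value k T = Sup {lp_obj k alpha | alpha d x f. lp_low_feasible k T alpha d x f}"

definition lp_up_optimal where
  "lp_up_optimal k T alpha d x f \<longleftrightarrow> lp_up_feasible k T alpha d x f
     \<and> (\<forall>alpha' d' x' f'. lp_up_feasible k T alpha' d' x' f' \<longrightarrow> lp_obj k alpha' \<le> lp_obj k alpha)"

definition squared_coeffs ::
  "nat \<Rightarrow> (nat \<Rightarrow> real) \<Rightarrow> (nat \<Rightarrow> real) \<Rightarrow> (nat \<Rightarrow> real) \<Rightarrow> (real \<times> real \<times> real) set" where
  "squared_coeffs m \<beta> \<gamma> \<delta> =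
     (\<lambda>i. (1 + \<beta> i + 1 / \<gamma> i, 1 + \<gamma> i + 1 / \<delta> i, 1 + \<delta> i + 1 / \<beta> i)) ` {1..m}"

definition metric_coeffs :: "(real \<times> real \<times> real) set" where
  "metric_coeffs = {(1, 1, 1)}"

end

theory Submission
  imports Defs
begin

lemma T_props:
  assumes "(\<exists>m \<beta> \<gamma> \<delta>. m \<ge> 1 \<and> (\<forall>i\<in>{1..m}. \<beta> i > 0 \<and> \<gamma> i > 0 \<and> \<delta> i > 0)
            \<and> T = squared_coeffs m \<beta> \<gamma> \<delta>) \<or> T = metric_coeffs"
  shows "\<forall>(B,C,D)\<in>T. B \<ge> 0 \<and> C \<ge> 1 \<and> D \<ge> 0"
  using assms
proof
  assume "\<exists>m \<beta> \<gamma> \<delta>. m \<ge> 1 \<and> (\<forall>i\<in>{1..m}. \<beta> i > 0 \<and> \<gamma> i > 0 \<and> \<delta> i > 0)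
            \<and> T = squared_coeffs m \<beta> \<gamma> \<delta>"
  then obtain m \<beta> \<gamma> \<delta> where h: "\<forall>i\<in>{1..m}. \<beta> i > 0 \<and> \<gamma> i > 0 \<and> \<delta> i > 0"
    and T: "T = squared_coeffs m \<beta> \<gamma> \<delta>" by blast
  show ?thesis unfolding T squared_coeffs_def
  proof (clarify)
    fix i assume i: "i \<in> {1..m}"
    then have "\<beta> i > 0" "\<gamma> i > 0" "\<delta> i > 0" using h by auto
    then show "1 + \<beta> i + 1 / \<gamma> i \<ge> 0 \<and> 1 + \<gamma> i + 1 / \<delta> i \<ge> 1 \<and> 1 + \<delta> i + 1 / \<beta> i \<ge> 0"
      by (simp add: add_nonneg_nonneg less_imp_le)
  qed
next
  assume "T = metric_coeffs" then show ?thesis by (simp add: metric_coeffs_def)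
qed

lemma low_bdd:
  assumes "k \<ge> 1"
  shows "bdd_above {lp_obj k alpha | alpha d x f. lp_low_feasible k T alpha d x f}"
proof (rule bdd_aboveI[where M="real k"], clarsimp)
  fix alpha d x f assume F: "lp_low_feasible k T alpha d x f"
  have "\<forall>j\<in>{1..k}. alpha j \<le> 1"
  proof
    fix j assume j: "j \<in> {1..k}"
    have "x j j \<le> (\<Sum>l=j..k. x j l)"
      by (rule member_le_sum) (use F j in \<open>auto simp: lp_low_feasible_def lp_common_def\<close>)
    also have "\<dots> \<le> f" using F j by (auto simp: lp_low_feasible_def lp_common_def)
    finally have a: "x j j \<le> f" .
    have "d j \<le> (\<Sum>j=1..k. d j)"
      by (rule member_le_sum) (use F j in \<open>auto simp: lp_low_feasible_def lp_common_def\<close>)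
    moreover have "x j j \<ge> alpha j - d j" using F j by (auto simp: lp_low_feasible_def)
    ultimately show "alpha j \<le> 1" using a F by (auto simp: lp_low_feasible_def lp_common_def)
  qed
  then have "(\<Sum>j=1..k. alpha j) \<le> (\<Sum>j=1..k. 1)" by (intro sum_mono) auto
  then show "lp_obj k alpha \<le> real k" by (simp add: lp_obj_def)
qed

theorem lemma9:
  fixes k :: nat and T :: "(real \<times> real \<times> real) set"
    and alpha d :: "nat \<Rightarrow> real" and x :: "nat \<Rightarrow> nat \<Rightarrow> real" and f :: real
  assumes "k \<ge> 1"
    and "(\<exists>m \<beta> \<gamma> \<delta>. m \<ge> 1 \<and> (\<forall>i\<in>{1..m}. \<beta> i > 0 \<and> \<gamma> i > 0 \<and> \<delta> i > 0)
            \<and> T = squared_coeffs m \<beta> \<gamma> \<delta>) \<or> T = metric_coeffs"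
    and "lp_up_optimal k T alpha d x f"
  shows "lp_low_value k T \<ge> lp_obj k alpha / (1 + Max ((\<lambda>j. alpha j - d j) ` {1..k}))"
proof -
  have TP: "\<forall>(B,C,D)\<in>T. B \<ge> 0 \<and> C \<ge> 1 \<and> D \<ge> 0" using T_props[OF assms(2)] .
  have up: "lp_up_feasible k T alpha d x f" using assms(3) by (simp add: lp_up_optimal_def)
  have opt: "\<And>a' d' x' f'. lp_up_feasible k T a' d' x' f' \<Longrightarrow> lp_obj k a' \<le> lp_obj k alpha"
    using assms(3) unfolding lp_up_optimal_def by blast
  define \<epsilon> where "\<epsilon> = Max ((\<lambda>j. alpha j - d j) ` {1..k})"
  have epsge: "\<And>j. j \<in> {1..k} \<Longrightarrow> alpha j - d j \<le> \<epsilon>" unfolding \<epsilon>_def by (rule Max_ge) auto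
  have kge: "alpha k \<ge> d k"
  proof (rule ccontr)
    assume nk: "\<not> alpha k \<ge> d k"
    define a' where "a' = alpha(k := d k)"
    have "lp_up_feasible k T a' d x f"
      unfolding lp_up_feasible_def lp_common_def
    proof (intro conjI)
      show "f + (\<Sum>j=1..k. d j) \<le> 1" using up by (simp add: lp_up_feasible_def lp_common_def)
      show "\<forall>j. 1 \<le> j \<and> j < k \<longrightarrow> a' j \<le> a' (j+1)"
        using up nk by (auto simp: lp_up_feasible_def lp_common_def a'_def)
      show "\<forall>j\<in>{1..k}. \<forall>l\<in>{1..k}. \<forall>(B,C,D)\<in>T. a' j \<le> B * a' l + C * d j + D * d l"
      proof (intro ballI, clarify)
        fix j l B C D assume j: "j \<in> {1..k}" and l: "l \<in> {1..k}" and t: "(B,C,D) \<in> T"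
        have BCD: "B \<ge> 0" "C \<ge> 1" "D \<ge> 0" using TP t by auto
        have nn: "alpha l \<ge> 0" "d l \<ge> 0" "d j \<ge> 0" "alpha j \<ge> 0"
          using up j l by (auto simp: lp_up_feasible_def lp_common_def)
        have tri: "alpha j \<le> B * alpha l + C * d j + D * d l"
          proof -
          have H: "\<forall>j\<in>{1..k}. \<forall>l\<in>{1..k}. \<forall>(B,C,D)\<in>T. alpha j \<le> B * alpha l + C * d j + D * d l"
            using up by (simp add: lp_up_feasible_def lp_common_def)
          show ?thesis using bspec[OF bspec[OF bspec[OF H j] l] t] by simp
        qed
        have al: "a' l \<ge> alpha l" using nk by (auto simp: a'_def)
        have al0: "a' l \<ge> 0" using nn al by linarith
        show "a' j \<le> B * a' l + C * d j + D * d l"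
        proof (cases "j = k")
          case True
          have "d j \<le> C * d j" using BCD nn by (simp add: mult_le_cancel_right1)
          moreover have "0 \<le> B * a' l" "0 \<le> D * d l" using BCD nn al0 by auto
          ultimately show ?thesis using True by (simp add: a'_def)
        next
          case False
          have "B * alpha l \<le> B * a' l" using BCD al by (simp add: mult_left_mono)
          then show ?thesis using False tri by (simp add: a'_def)
        qed
      qed
      show "\<forall>j\<in>{1..k}. (\<Sum>l=j..k. x j l) \<le> f" using up by (simp add: lp_up_feasible_def lp_common_def)
      show "\<forall>j\<in>{1..k}. a' j \<ge> 0 \<and> d j \<ge> 0" using up by (auto simp: lp_up_feasible_def lp_common_def a'_def)
      show "f \<ge> 0" using up by (simp add: lp_up_feasible_def lp_common_def)
      show "\<forall>j\<in>{1..k}. \<forall>l\<in>{j..k}. x j l \<ge> 0" using up by (simp add: lp_up_feasible_def lp_common_def)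
      show "\<forall>j\<in>{1..k}. \<forall>l\<in>{j<..k}. x j l \<ge> a' j - d l"
        using up by (auto simp: lp_up_feasible_def a'_def)
    qed
    then have "lp_obj k a' \<le> lp_obj k alpha" by (rule opt)
    moreover have "lp_obj k a' = lp_obj k alpha + (d k - alpha k)"
    proof -
      have "lp_obj k a' = (\<Sum>j=1..k. alpha j + (if j = k then d k - alpha k else 0))"
        unfolding lp_obj_def a'_def by (rule sum.cong) auto
      also have "\<dots> = lp_obj k alpha + (d k - alpha k)"
        using assms(1) by (simp add: sum.distrib lp_obj_def)
      finally show ?thesis .
    qed
    ultimately show False using nk by simp
  qed
  have eps0: "\<epsilon> \<ge> 0" using epsge[of k] assms(1) kge by auto
  define s where "s = 1 + \<epsilon>"
  have s0: "s > 0" using eps0 by (simp add: s_def)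
  define a' where "a' = (\<lambda>j. alpha j / s)"
  define d' where "d' = (\<lambda>j. d j / s)"
  define x' where "x' = (\<lambda>j l. (x j l + (if l = j then \<epsilon> else 0)) / s)"
  define f' where "f' = (f + \<epsilon>) / s"
  have low: "lp_low_feasible k T a' d' x' f'"
    unfolding lp_low_feasible_def lp_common_def
  proof (intro conjI)
    have "f + (\<Sum>j=1..k. d j) \<le> 1" using up by (simp add: lp_up_feasible_def lp_common_def)
    then have "(f + \<epsilon> + (\<Sum>j=1..k. d j)) / s \<le> s / s"
      using s0 by (intro divide_right_mono) (auto simp: s_def)
    then show "f' + (\<Sum>j=1..k. d' j) \<le> 1"
      using s0 by (simp add: f'_def d'_def sum_divide_distrib[symmetric] add_divide_distrib)
    show "\<forall>j. 1 \<le> j \<and> j < k \<longrightarrow> a' j \<le> a' (j+1)"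
      using up s0 by (auto simp: lp_up_feasible_def lp_common_def a'_def divide_right_mono)
    show "\<forall>j\<in>{1..k}. \<forall>l\<in>{1..k}. \<forall>(B,C,D)\<in>T. a' j \<le> B * a' l + C * d' j + D * d' l"
    proof (intro ballI, clarify)
      fix j l B C D assume j: "j \<in> {1..k}" and l: "l \<in> {1..k}" and t: "(B,C,D) \<in> T"
      have tri: "alpha j \<le> B * alpha l + C * d j + D * d l"
        proof -
          have H: "\<forall>j\<in>{1..k}. \<forall>l\<in>{1..k}. \<forall>(B,C,D)\<in>T. alpha j \<le> B * alpha l + C * d j + D * d l"
            using up by (simp add: lp_up_feasible_def lp_common_def)
          show ?thesis using bspec[OF bspec[OF bspec[OF H j] l] t] by simp
        qed
      then have "alpha j / s \<le> (B * alpha l + C * d j + D * d l) / s"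
        using s0 by (intro divide_right_mono) auto
      then show "a' j \<le> B * a' l + C * d' j + D * d' l"
        by (simp add: a'_def d'_def add_divide_distrib)
    qed
    show "\<forall>j\<in>{1..k}. (\<Sum>l=j..k. x' j l) \<le> f'"
    proof
      fix j assume j: "j \<in> {1..k}"
      have "(\<Sum>l=j..k. x j l + (if l = j then \<epsilon> else 0)) = (\<Sum>l=j..k. x j l) + \<epsilon>"
        using j by (simp add: sum.distrib)
      moreover have "(\<Sum>l=j..k. x j l) \<le> f" using up j by (simp add: lp_up_feasible_def lp_common_def)
      ultimately have "(\<Sum>l=j..k. x j l + (if l = j then \<epsilon> else 0)) / s \<le> (f + \<epsilon>) / s"
        using s0 by (intro divide_right_mono) auto
      then show "(\<Sum>l=j..k. x' j l) \<le> f'"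
        by (simp add: x'_def f'_def sum_divide_distrib[symmetric])
    qed
    show "\<forall>j\<in>{1..k}. a' j \<ge> 0 \<and> d' j \<ge> 0"
      using up s0 by (auto simp: lp_up_feasible_def lp_common_def a'_def d'_def)
    show "f' \<ge> 0" using up s0 eps0 by (simp add: lp_up_feasible_def lp_common_def f'_def)
    show "\<forall>j\<in>{1..k}. \<forall>l\<in>{j..k}. x' j l \<ge> 0"
      using up s0 eps0 by (auto simp: lp_up_feasible_def lp_common_def x'_def)
    show "\<forall>j\<in>{1..k}. \<forall>l\<in>{j..k}. x' j l \<ge> a' j - d' l"
    proof (intro ballI)
      fix j l assume j: "j \<in> {1..k}" and l: "l \<in> {j..k}"
      have "alpha j - d l \<le> x j l + (if l = j then \<epsilon> else 0)"
      proof (cases "l = j")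
        case True
        have "x j j \<ge> 0" using up j by (auto simp: lp_up_feasible_def lp_common_def)
        then show ?thesis using True epsge[OF j] by simp
      next
        case False
        then have "l \<in> {j<..k}" using l by auto
        then show ?thesis using up j False by (auto simp: lp_up_feasible_def)
      qed
      then have "(alpha j - d l) / s \<le> (x j l + (if l = j then \<epsilon> else 0)) / s"
        using s0 by (intro divide_right_mono) auto
      then show "x' j l \<ge> a' j - d' l" by (simp add: x'_def a'_def d'_def diff_divide_distrib)
    qed
  qed
  have "lp_obj k a' \<in> {lp_obj k alpha | alpha d x f. lp_low_feasible k T alpha d x f}"
    using low by blast
  then have "lp_obj k a' \<le> lp_low_value k T"
    unfolding lp_low_value_def by (rule cSup_upper) (rule low_bdd[OF assms(1)])
  moreover have "lp_obj k a' = lp_obj k alpha / s"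
    by (simp add: lp_obj_def a'_def sum_divide_distrib)
  ultimately show ?thesis by (simp add: s_def \<epsilon>_def)
qed

end
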